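(* Let $q\ge 1$ and $s\ge 0$ be integers and assume that the polynomials $L_0,\dots,L_q$ defined in the context are linearly independent. For $k=0,\dots,q$ and $m=0,\dots,2^s-1$ define $$e_{k,m}(z) = \frac{1}{\sqrt{(2k+1)2^s}}\, r_q^m(z2^{-s})\, D_q^{-1}(z2^{-s})\, L_k(z2^{-s}), \qquad \tilde e_{k,m}(z) = D_q^{2^s}(z2^{-s})\, e_{k,m}(z),$$ and $\Pi^m = \{\tilde e_{0,m},\tilde e_{1,m},\dots,\tilde e_{q,m}\}$. Then for each $m = 0,1,\dots,2^s-1$, the functions in $\Pi^m$ are linearly independent.
   Context: $N_q(z) = \sum_{j=0}^q \frac{(2q-j)!\,q!}{(2q)!\,j!\,(q-j)!} z^j$, $D_q(z) = N_q(-z)$, $r_q = N_q/D_q$ (diagonal Padé approximant of $e^z$). For scalar $z$ (not a zero of $D_q$), let $C_0(z),\dots,C_q(z)$ be the solution of the linear system, with $\tilde C_k = C_k/(2k+1)$, $\tilde C_{q+1}=0$: $\sum_{k=0}^q(-1)^k(2k+1)\tilde C_k = 1$ and, for $j=1,\dots,q$, $-z\tilde C_{j-1} + (4j+2)\tilde C_j + z\tilde C_{j+1} = 0$. These are rational functions of the form $C_k(z) = L_k(z)/D_q(z)$ with $L_k$ polynomials of degree at most $q$, and $\sum_k C_k(z) = r_q(z)$. (These are the coefficients of the Legendre–Petrov–Galerkin expansion $\sum_k C_k P_k(t)\approx e^{zt}$ on $[0,1]$.) *)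

theory Defs
  imports "HOL-Analysis.Analysis" "HOL-Computational_Algebra.Polynomial"
begin

text \<open>Numerator of the diagonal Pade approximant of exp:
  N_q(z) = sum_{j=0}^q (2q-j)! q! / ((2q)! j! (q-j)!) z^j.\<close>
definition Nq :: "nat \<Rightarrow> complex poly" where
  "Nq q = (\<Sum>j\<le>q. monom (fact (2*q - j) * fact q / (fact (2*q) * fact j * fact (q - j))) j)"

definition Dq :: "nat \<Rightarrow> complex poly" where
  "Dq q = pcompose (Nq q) [:0, -1:]"

definition rq :: "nat \<Rightarrow> complex \<Rightarrow> complex" where
  "rq q z = poly (Nq q) z / poly (Dq q) z"

text \<open>The solution C_0(z),...,C_q(z) of the linear system (with C_k = 0 for k > q,
  so that tilde C_{q+1} = 0), where tilde C_k = C_k/(2k+1).\<close>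
definition Csol :: "nat \<Rightarrow> complex \<Rightarrow> nat \<Rightarrow> complex" where
  "Csol q z = (THE C. (\<forall>k>q. C k = 0) \<and>
      (\<Sum>k\<le>q. (-1)^k * of_nat (2*k+1) * (C k / of_nat (2*k+1))) = 1 \<and>
      (\<forall>j\<in>{1..q}. - z * (C (j-1) / of_nat (2*(j-1)+1)) + of_nat (4*j+2) * (C j / of_nat (2*j+1))
                     + z * (C (j+1) / of_nat (2*(j+1)+1)) = 0))"

definition Lpoly :: "nat \<Rightarrow> nat \<Rightarrow> complex poly" where
  "Lpoly q k = (THE p. degree p \<le> q \<and>
      (\<forall>z. poly (Dq q) z \<noteq> 0 \<longrightarrow> Csol q z k = poly p z / poly (Dq q) z))"

definition ekm :: "nat \<Rightarrow> nat \<Rightarrow> nat \<Rightarrow> nat \<Rightarrow> complex \<Rightarrow> complex" where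
  "ekm q s k m z = (let w = z / 2^s in
     1 / complex_of_real (sqrt (real ((2*k+1) * 2^s))) * (rq q w)^m
       * inverse (poly (Dq q) w) * poly (Lpoly q k) w)"

definition etkm :: "nat \<Rightarrow> nat \<Rightarrow> nat \<Rightarrow> nat \<Rightarrow> complex \<Rightarrow> complex" where
  "etkm q s k m z = (poly (Dq q) (z / 2^s))^(2^s) * ekm q s k m z"

end

theory Submission
  imports Defs
begin

lemma Nq0: "poly (Nq q) 0 = 1"
proof -
  have "poly (Nq q) 0 = coeff (Nq q) 0" by (simp add: poly_0_coeff_0)
  also have "\<dots> = (\<Sum>j\<le>q. if j = 0 then fact (2*q - j) * fact q / (fact (2*q) * fact j * fact (q - j)) else 0)"
    unfolding Nq_def coeff_sum by (intro sum.cong) (auto simp: coeff_monom)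
  also have "\<dots> = fact (2*q) * fact q / (fact (2*q) * fact 0 * fact q)"
    by (simp add: sum.delta)
  also have "\<dots> = 1" by simp
  finally show ?thesis .
qed

lemma Dq0: "poly (Dq q) 0 = 1"
  by (simp add: Dq_def poly_pcompose Nq0)

theorem lemma3:
  fixes q s :: nat
  assumes "q \<ge> 1"
    and Lindep: "\<And>a :: nat \<Rightarrow> complex.
           (\<Sum>k\<le>q. smult (a k) (Lpoly q k)) = 0 \<Longrightarrow> \<forall>k\<le>q. a k = 0"
    and "m < 2^s"
  shows "\<forall>a :: nat \<Rightarrow> complex.
           (\<forall>z. poly (Dq q) (z / 2^s) \<noteq> 0 \<longrightarrow> (\<Sum>k\<le>q. a k * etkm q s k m z) = 0)
           \<longrightarrow> (\<forall>k\<le>q. a k = 0)"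
proof (rule allI, rule impI)
  fix a :: "nat \<Rightarrow> complex"
  assume H: "\<forall>z. poly (Dq q) (z / 2^s) \<noteq> 0 \<longrightarrow> (\<Sum>k\<le>q. a k * etkm q s k m z) = 0"
  define c where "c k = 1 / complex_of_real (sqrt (real ((2*k+1) * 2^s)))" for k
  have c0: "c k \<noteq> 0" for k
  proof -
    have "real ((2*k+1) * 2^s) > 0" by (simp only: of_nat_0_less_iff) simp
    then show ?thesis unfolding c_def by (metis divide_eq_0_iff of_real_eq_0_iff one_neq_zero real_sqrt_eq_zero_cancel_iff less_irrefl)
  qed
  define P where "P = (\<Sum>k\<le>q. smult (a k * c k) (Lpoly q k))"
  have "poly (P * Nq q * Dq q) w = 0" for w
  proof (cases "poly (Nq q) w = 0 \<or> poly (Dq q) w = 0")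
    case True then show ?thesis by auto
  next
    case False
    hence N: "poly (Nq q) w \<noteq> 0" and D: "poly (Dq q) w \<noteq> 0" by auto
    define z where "z = w * 2^s"
    have wz: "z / 2^s = w" unfolding z_def by simp
    have E0: "(\<Sum>k\<le>q. a k * etkm q s k m z) = 0" using H D wz by auto
    have E1: "(\<Sum>k\<le>q. a k * etkm q s k m z) =
       (poly (Dq q) w)^(2^s) * (rq q w)^m * inverse (poly (Dq q) w) * poly P w"
      unfolding etkm_def ekm_def wz Let_def P_def poly_sum
      by (simp add: sum_distrib_left c_def algebra_simps)
    have "poly P w = 0" using E0 E1 using N D by (simp add: rq_def)
    then show ?thesis by simp
  qed
  hence "P * Nq q * Dq q = 0" using poly_all_0_iff_0 by blast
  moreover have "Nq q \<noteq> 0" using Nq0[of q] by auto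
  moreover have "Dq q \<noteq> 0" using Dq0[of q] by auto
  ultimately have "P = 0" by simp
  hence "\<forall>k\<le>q. a k * c k = 0" using Lindep[of "\<lambda>k. a k * c k"] unfolding P_def by blast
  thus "\<forall>k\<le>q. a k = 0" using c0 by simp
qed

end
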